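(* For any sequence of instances $\{\mathcal{I}_N\}_{N\ge1}$ of the binary voting game there exists a sequence of regular strategy profiles $\{\Sigma'_N\}_{N\ge1}$ ($\Sigma'_N$ a profile in $\mathcal{I}_N$) such that $\lim_{N\to\infty}A(\Sigma'_N)=1$.
   Context: Binary voting game. An instance has $N$ agents each voting for $\mathbf{A}$ or $\mathbf{R}$. Unobserved world state $W\in\{L,H\}$ with common prior $P_L,P_H>0$. Conditional on $W$, each agent independently receives a signal $S_n\in\{l,h\}$ with $P_{sw}=\Pr[S_n=s\mid W=w]$, $P_{hH}>P_{hL}$, $P_{lH}<P_{lL}$. With threshold $\mu\in(0,1)$, $\mathbf{A}$ wins iff at least $\mu N$ agents vote $\mathbf{A}$, else $\mathbf{R}$ wins. Agent $n$ has utility $v_n:\{L,H\}\times\{\mathbf{A},\mathbf{R}\}\to\{0,\dots,B\}$ with $v_n(H,\mathbf{A})>v_n(L,\mathbf{A})$, $v_n(H,\mathbf{R})<v_n(L,\mathbf{R})$. Every agent is friendly ($v_n(H,\mathbf{A})>v_n(L,\mathbf{A})>v_n(L,\mathbf{R})>v_n(H,\mathbf{R})$), unfriendly ($v_n(L,\mathbf{R})>v_n(H,\mathbf{R})>v_n(H,\mathbf{A})>v_n(L,\mathbf{A})$), or contingent ($v_n(H,\mathbf{A})>v_n(H,\mathbf{R})$, $v_n(L,\mathbf{R})>v_n(L,\mathbf{A})$). Fixed constants $\alpha_F,\alpha_U,\alpha_C\ge0$ summing to $1$: $N_F=\lfloor\alpha_F N\rfloor$ friendly, $N_U=\lfloor\alpha_U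 N\rfloor$ unfriendly, $N_C=N-N_F-N_U$ contingent agents. Standing assumption: $\alpha_F<\mu$ and $\alpha_U<1-\mu$ (neither predetermined group can dominate), so the informed majority decision is $\mathbf{A}$ in $H$ and $\mathbf{R}$ in $L$. A sequence of instances $\{\mathcal{I}_N\}$: $\mathcal{I}_N$ has $N$ agents; all share $\mu$, prior, signal distributions and $\alpha$'s; utilities arbitrary. Strategy $\sigma=(\beta_l,\beta_h)$ with $\beta_s$ = probability of voting $\mathbf{A}$ on signal $s$. A profile is regular if friendly agents always vote $\mathbf{A}$ and unfriendly agents always vote $\mathbf{R}$. Fidelity: $A(\Sigma)=P_L\lambda^{\mathbf{R}}_L(\Sigma)+P_H\lambda^{\mathbf{A}}_H(\Sigma)$, where $\lambda^{\mathbf{X}}_w(\Sigma)$ is the ex-ante probability that $\mathbf{X}$ wins in state $w$. *)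

theory Defs
  imports Complex_Main
begin

datatype world = L | H
datatype outcome = Acc | Rej   (* Acc = alternative A, Rej = alternative R *)
datatype signal = sl | sh

type_synonym utility = "world \<Rightarrow> outcome \<Rightarrow> nat"
type_synonym strategy = "real \<times> real"   (* (beta_l, beta_h) *)

definition friendly :: "utility \<Rightarrow> bool" where
  "friendly v \<longleftrightarrow> v H Acc > v L Acc \<and> v L Acc > v L Rej \<and> v L Rej > v H Rej"

definition unfriendly :: "utility \<Rightarrow> bool" where
  "unfriendly v \<longleftrightarrow> v L Rej > v H Rej \<and> v H Rej > v H Acc \<and> v H Acc > v L Acc"

definition contingent :: "utility \<Rightarrow> bool" where
  "contingent v \<longleftrightarrow> v H Acc > v H Rej \<and> v L Rej > v L Acc"

definition valid_instance :: "nat \<Rightarrow> real \<Rightarrow> real \<Rightarrow> nat \<Rightarrow> (nat \<Rightarrow> utility) \<Rightarrow> bool" where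
  "valid_instance B alphaF alphaU N v \<longleftrightarrow>
     (\<forall>n<N. \<forall>w x. v n w x \<le> B) \<and>
     (\<forall>n<N. v n H Acc > v n L Acc \<and> v n H Rej < v n L Rej) \<and>
     (\<forall>n<N. friendly (v n) \<or> unfriendly (v n) \<or> contingent (v n)) \<and>
     card {n. n < N \<and> friendly (v n)} = nat \<lfloor>alphaF * real N\<rfloor> \<and>
     card {n. n < N \<and> unfriendly (v n)} = nat \<lfloor>alphaU * real N\<rfloor>"

definition valid_strategy :: "strategy \<Rightarrow> bool" where
  "valid_strategy \<sigma> \<longleftrightarrow> 0 \<le> fst \<sigma> \<and> fst \<sigma> \<le> 1 \<and> 0 \<le> snd \<sigma> \<and> snd \<sigma> \<le> 1"

definition regular_profile :: "nat \<Rightarrow> (nat \<Rightarrow> utility) \<Rightarrow> (nat \<Rightarrow> strategy) \<Rightarrow> bool" where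
  "regular_profile N v \<Sigma> \<longleftrightarrow>
     (\<forall>n<N. valid_strategy (\<Sigma> n)) \<and>
     (\<forall>n<N. friendly (v n) \<longrightarrow> \<Sigma> n = (1, 1)) \<and>
     (\<forall>n<N. unfriendly (v n) \<longrightarrow> \<Sigma> n = (0, 0))"

definition prob_voteA :: "(signal \<Rightarrow> world \<Rightarrow> real) \<Rightarrow> strategy \<Rightarrow> world \<Rightarrow> real" where
  "prob_voteA Ps \<sigma> w = Ps sl w * fst \<sigma> + Ps sh w * snd \<sigma>"

definition prob_voters :: "(signal \<Rightarrow> world \<Rightarrow> real) \<Rightarrow> nat \<Rightarrow> (nat \<Rightarrow> strategy) \<Rightarrow> world \<Rightarrow> nat set \<Rightarrow> real" where
  "prob_voters Ps N \<Sigma> w S =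
     (\<Prod>n\<in>S. prob_voteA Ps (\<Sigma> n) w) * (\<Prod>n\<in>{..<N} - S. 1 - prob_voteA Ps (\<Sigma> n) w)"

definition win_prob :: "(signal \<Rightarrow> world \<Rightarrow> real) \<Rightarrow> real \<Rightarrow> nat \<Rightarrow> (nat \<Rightarrow> strategy) \<Rightarrow> world \<Rightarrow> outcome \<Rightarrow> real" where
  "win_prob Ps \<mu> N \<Sigma> w X =
     (\<Sum>S\<in>{S. S \<subseteq> {..<N} \<and> ((\<mu> * real N \<le> real (card S)) = (X = Acc))}. prob_voters Ps N \<Sigma> w S)"

definition fidelity :: "real \<Rightarrow> real \<Rightarrow> (signal \<Rightarrow> world \<Rightarrow> real) \<Rightarrow> real \<Rightarrow> nat \<Rightarrow> (nat \<Rightarrow> strategy) \<Rightarrow> real" where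
  "fidelity PL PH Ps \<mu> N \<Sigma> = PL * win_prob Ps \<mu> N \<Sigma> L Rej + PH * win_prob Ps \<mu> N \<Sigma> H Acc"

end

theory Submission
  imports Defs
begin

definition PV :: "(nat \<Rightarrow> real) \<Rightarrow> nat set \<Rightarrow> nat set \<Rightarrow> real" where
  "PV q I S = (\<Prod>n\<in>S. q n) * (\<Prod>n\<in>I - S. 1 - q n)"

lemma sum_Pow_insert:
  assumes "finite I" "a \<notin> I"
  shows "sum h (Pow (insert a I)) = sum h (Pow I) + sum (\<lambda>S. h (insert a S)) (Pow I)"
proof -
  have d: "Pow I \<inter> insert a ` Pow I = {}" using assms(2) by auto
  have inj: "inj_on (insert a) (Pow I)" using assms(2) unfolding inj_on_def by (metis PowD insert_ident subsetD)
  have "sum h (Pow (insert a I)) = sum h (Pow I) + sum h (insert a ` Pow I)"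
    unfolding Pow_insert using assms(1) d by (intro sum.union_disjoint) auto
  also have "sum h (insert a ` Pow I) = sum (\<lambda>S. h (insert a S)) (Pow I)"
    using inj by (simp add: sum.reindex)
  finally show ?thesis .
qed

lemma PV_insert1:
  assumes "finite I" "a \<notin> I" "S \<subseteq> I"
  shows "PV q (insert a I) S = (1 - q a) * PV q I S"
proof -
  have "insert a I - S = insert a (I - S)" using assms by auto
  moreover have "a \<notin> I - S" using assms by auto
  ultimately show ?thesis unfolding PV_def using assms(1) by (simp add: prod.insert)
qed

lemma PV_insert2:
  assumes "finite I" "a \<notin> I" "S \<subseteq> I"
  shows "PV q (insert a I) (insert a S) = q a * PV q I S"
proof -
  have "insert a I - insert a S = I - S" using assms by auto
  moreover have "a \<notin> S" "finite S" using assms finite_subset by auto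
  ultimately show ?thesis unfolding PV_def by simp
qed

lemma moments:
  assumes "finite I"
  shows "(\<Sum>S\<in>Pow I. PV q I S) = 1 \<and>
         (\<Sum>S\<in>Pow I. PV q I S * real (card S)) = sum q I \<and>
         (\<Sum>S\<in>Pow I. PV q I S * real (card S)^2) = (sum q I)^2 + (\<Sum>n\<in>I. q n * (1 - q n))"
  using assms
proof (induction I rule: finite_induct)
  case empty
  then show ?case by (simp add: PV_def)
next
  case (insert a I)
  let ?M0 = "\<Sum>S\<in>Pow I. PV q I S"
  let ?M1 = "\<Sum>S\<in>Pow I. PV q I S * real (card S)"
  let ?M2 = "\<Sum>S\<in>Pow I. PV q I S * real (card S)^2"
  have cs: "\<And>S. S \<in> Pow I \<Longrightarrow> card (insert a S) = Suc (card S)"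
    using insert(1,2) by (meson PowD card_insert_disjoint finite_subset subset_iff)
  have e1: "\<And>f. (\<Sum>S\<in>Pow (insert a I). PV q (insert a I) S * f (card S)) =
      (1 - q a) * (\<Sum>S\<in>Pow I. PV q I S * f (card S)) + q a * (\<Sum>S\<in>Pow I. PV q I S * f (Suc (card S)))"
  proof -
    fix f :: "nat \<Rightarrow> real"
    have "(\<Sum>S\<in>Pow (insert a I). PV q (insert a I) S * f (card S)) =
      (\<Sum>S\<in>Pow I. PV q (insert a I) S * f (card S)) + (\<Sum>S\<in>Pow I. PV q (insert a I) (insert a S) * f (card (insert a S)))"
      using insert(1,2) by (rule sum_Pow_insert)
    also have "\<dots> = (\<Sum>S\<in>Pow I. (1 - q a) * (PV q I S * f (card S))) + (\<Sum>S\<in>Pow I. q a * (PV q I S * f (Suc (card S))))"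
      using insert(1,2) cs by (intro arg_cong2[where f="(+)"] sum.cong) (auto simp: PV_insert1 PV_insert2)
    finally show "?thesis f" by (simp add: sum_distrib_left)
  qed
  have a0: "(\<Sum>S\<in>Pow (insert a I). PV q (insert a I) S) = (1 - q a) * ?M0 + q a * ?M0"
    using e1[of "\<lambda>_. 1"] by simp
  have a1: "(\<Sum>S\<in>Pow (insert a I). PV q (insert a I) S * real (card S)) = (1 - q a) * ?M1 + q a * (?M1 + ?M0)"
    using e1[of "\<lambda>k. real k"] by (simp add: algebra_simps sum.distrib)
  have a2: "(\<Sum>S\<in>Pow (insert a I). PV q (insert a I) S * real (card S)^2) = (1 - q a) * ?M2 + q a * (?M2 + 2 * ?M1 + ?M0)"
    using e1[of "\<lambda>k. real k ^ 2"] by (simp add: algebra_simps sum.distrib power2_eq_square sum_distrib_left)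
  show ?case using insert(1,2) insert.IH a0 a1 a2
    by (simp add: algebra_simps power2_eq_square)
qed

lemma PV_nonneg: "finite I \<Longrightarrow> (\<And>n. n \<in> I \<Longrightarrow> 0 \<le> q n \<and> q n \<le> 1) \<Longrightarrow> S \<subseteq> I \<Longrightarrow> 0 \<le> PV q I S"
  unfolding PV_def by (intro mult_nonneg_nonneg prod_nonneg) auto

lemma variance:
  assumes "finite I"
  shows "(\<Sum>S\<in>Pow I. PV q I S * (real (card S) - sum q I)^2) = (\<Sum>n\<in>I. q n * (1 - q n))"
proof -
  let ?E = "sum q I"
  have "(\<Sum>S\<in>Pow I. PV q I S * (real (card S) - ?E)^2) =
     (\<Sum>S\<in>Pow I. PV q I S * real (card S)^2 - 2 * ?E * (PV q I S * real (card S)) + ?E^2 * PV q I S)"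
    by (intro sum.cong) (simp_all add: power2_eq_square algebra_simps)
  also have "\<dots> = (\<Sum>S\<in>Pow I. PV q I S * real (card S)^2) - 2 * ?E * (\<Sum>S\<in>Pow I. PV q I S * real (card S))
       + ?E^2 * (\<Sum>S\<in>Pow I. PV q I S)"
    by (simp only: sum.distrib sum_subtractf sum_distrib_left)
  finally show ?thesis using moments[OF assms, of q] by (simp add: power2_eq_square)
qed

lemma chebyshev:
  assumes "finite I" "\<And>n. n \<in> I \<Longrightarrow> 0 \<le> q n \<and> q n \<le> 1" "D > 0" "T \<subseteq> Pow I"
    "\<And>S. S \<in> T \<Longrightarrow> D \<le> \<bar>real (card S) - sum q I\<bar>"
  shows "sum (PV q I) T \<le> real (card I) / D^2"
proof -
  let ?E = "sum q I"
  have "sum (PV q I) T \<le> (\<Sum>S\<in>T. PV q I S * (real (card S) - ?E)^2 / D^2)"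
  proof (rule sum_mono)
    fix S assume S: "S \<in> T"
    have p: "0 \<le> PV q I S" using PV_nonneg[of I q S] assms(1,2) S assms(4) by blast
    have "D^2 \<le> (real (card S) - ?E)^2" using assms(5)[OF S] assms(3)
      by (metis abs_le_square_iff abs_of_pos)
    hence "1 \<le> (real (card S) - ?E)^2 / D^2" using assms(3) by simp
    then show "PV q I S \<le> PV q I S * (real (card S) - ?E)^2 / D^2"
      using p by (metis mult_le_cancel_left1 not_le order_trans times_divide_eq_right mult_right_mono mult_1_right)
  qed
  also have "\<dots> \<le> (\<Sum>S\<in>Pow I. PV q I S * (real (card S) - ?E)^2 / D^2)"
    using assms PV_nonneg[of I q] by (intro sum_mono2) (auto intro!: divide_nonneg_nonneg mult_nonneg_nonneg)
  also have "\<dots> = (\<Sum>n\<in>I. q n * (1 - q n)) / D^2"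
    using variance[OF assms(1), of q] by (simp add: sum_divide_distrib[symmetric])
  also have "\<dots> \<le> real (card I) / D^2"
  proof -
    have "(\<Sum>n\<in>I. q n * (1 - q n)) \<le> (\<Sum>n\<in>I. 1)"
      using assms(2) by (intro sum_mono) (smt (verit) mult_le_one)
    then show ?thesis using assms(3) by (simp add: divide_right_mono)
  qed
  finally show ?thesis .
qed

lemma PV_split:
  assumes "finite I"
  shows "sum (PV q I) {S. S \<subseteq> I \<and> \<not> P S} + sum (PV q I) {S. S \<subseteq> I \<and> P S} = 1"
proof -
  have "Pow I = {S. S \<subseteq> I \<and> \<not> P S} \<union> {S. S \<subseteq> I \<and> P S}" by auto
  moreover have "finite {S. S \<subseteq> I \<and> \<not> P S}" "finite {S. S \<subseteq> I \<and> P S}"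
    using assms by (auto intro: finite_subset[of _ "Pow I"])
  ultimately have "sum (PV q I) (Pow I) = sum (PV q I) {S. S \<subseteq> I \<and> \<not> P S} + sum (PV q I) {S. S \<subseteq> I \<and> P S}"
    by (metis (no_types, lifting) disjoint_iff mem_Collect_eq sum.union_disjoint)
  then show ?thesis using moments[OF assms, of q] by simp
qed

lemma tailA:
  assumes "\<And>n. n < N \<Longrightarrow> 0 \<le> q n \<and> q n \<le> 1" "\<delta> > 0" "\<delta> * real N \<ge> 1"
    "sum q {..<N} \<le> \<mu> * real N - 2 * \<delta> * real N + 1"
  shows "sum (PV q {..<N}) {S. S \<subseteq> {..<N} \<and> \<mu> * real N \<le> real (card S)} \<le> 1 / (\<delta>^2 * real N)"
proof -
  have Np: "real N > 0" using assms(2,3) by (metis less_le_not_le mult_eq_0_iff not_one_le_zero of_nat_0_less_iff zero_less_iff_neq_zero of_nat_0)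
  have "sum (PV q {..<N}) {S. S \<subseteq> {..<N} \<and> \<mu> * real N \<le> real (card S)} \<le> real (card {..<N}) / (\<delta> * real N)^2"
  proof (rule chebyshev)
    show "0 < \<delta> * real N" using assms(3) by linarith
    fix S assume "S \<in> {S. S \<subseteq> {..<N} \<and> \<mu> * real N \<le> real (card S)}"
    then show "\<delta> * real N \<le> \<bar>real (card S) - sum q {..<N}\<bar>" using assms(3,4) by auto
  qed (use assms(1) in auto)
  also have "\<dots> = 1 / (\<delta>^2 * real N)" using Np by (simp add: power2_eq_square field_simps)
  finally show ?thesis .
qed

lemma tailR:
  assumes "\<And>n. n < N \<Longrightarrow> 0 \<le> q n \<and> q n \<le> 1" "\<delta> > 0" "\<delta> * real N \<ge> 1"
    "sum q {..<N} \<ge> \<mu> * real N + 2 * \<delta> * real N - 1"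
  shows "sum (PV q {..<N}) {S. S \<subseteq> {..<N} \<and> \<not> \<mu> * real N \<le> real (card S)} \<le> 1 / (\<delta>^2 * real N)"
proof -
  have Np: "real N > 0" using assms(2,3) by (metis less_le_not_le mult_eq_0_iff not_one_le_zero of_nat_0_less_iff zero_less_iff_neq_zero of_nat_0)
  have "sum (PV q {..<N}) {S. S \<subseteq> {..<N} \<and> \<not> \<mu> * real N \<le> real (card S)} \<le> real (card {..<N}) / (\<delta> * real N)^2"
  proof (rule chebyshev)
    show "0 < \<delta> * real N" using assms(3) by linarith
    fix S assume "S \<in> {S. S \<subseteq> {..<N} \<and> \<not> \<mu> * real N \<le> real (card S)}"
    then show "\<delta> * real N \<le> \<bar>real (card S) - sum q {..<N}\<bar>" using assms(3,4) by auto
  qed (use assms(1) in auto)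
  also have "\<dots> = 1 / (\<delta>^2 * real N)" using Np by (simp add: power2_eq_square field_simps)
  finally show ?thesis .
qed

lemma fr_not_unfr: "friendly x \<Longrightarrow> \<not> unfriendly x"
  unfolding friendly_def unfriendly_def by auto

lemma floor_bounds:
  assumes "0 \<le> x" shows "real (nat \<lfloor>x\<rfloor>) \<le> x" "x - 1 \<le> real (nat \<lfloor>x\<rfloor>)"
  using assms by (simp_all add: of_nat_nat)

theorem theorem3:
  fixes \<mu> PL PH alphaF alphaU alphaC :: real
    and Ps :: "signal \<Rightarrow> world \<Rightarrow> real"
    and B :: nat
    and v :: "nat \<Rightarrow> nat \<Rightarrow> utility"
  assumes mu: "0 < \<mu>" "\<mu> < 1"
    and prior: "0 < PL" "0 < PH" "PL + PH = 1"
    and sig: "\<And>s w. 0 \<le> Ps s w" "\<And>w. Ps sl w + Ps sh w = 1"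
      "Ps sh H > Ps sh L" "Ps sl H < Ps sl L"
    and alpha: "0 \<le> alphaF" "0 \<le> alphaU" "0 \<le> alphaC" "alphaF + alphaU + alphaC = 1"
    and nodom: "alphaF < \<mu>" "alphaU < 1 - \<mu>"
    and inst: "\<And>N. N \<ge> 1 \<Longrightarrow> valid_instance B alphaF alphaU N (v N)"
  shows "\<exists>\<Sigma> :: nat \<Rightarrow> nat \<Rightarrow> strategy.
           (\<forall>N\<ge>1. regular_profile N (v N) (\<Sigma> N)) \<and>
           (\<lambda>N. fidelity PL PH Ps \<mu> N (\<Sigma> N)) \<longlonglongrightarrow> 1"
proof -
  define aC where "aC = 1 - alphaF - alphaU"
  have aC: "aC > 0" using nodom unfolding aC_def by linarith
  define t where "t = (\<mu> - alphaF) / aC"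
  have t0: "0 < t" unfolding t_def using aC nodom by simp
  have t1: "t < 1" unfolding t_def using aC nodom by (simp add: aC_def)
  have tm: "alphaF + aC * t = \<mu>" unfolding t_def using aC by simp
  define m where "m = (Ps sh L + Ps sh H) / 2"
  define d where "d = Ps sh H - Ps sh L"
  have d: "d > 0" using sig(3) unfolding d_def by simp
  have sh1: "\<And>w. Ps sh w \<le> 1" "\<And>w. Ps sl w = 1 - Ps sh w" using sig(1,2) by (smt (verit))+
  have m01: "0 \<le> m" "m \<le> 1" unfolding m_def using sig(1)[of sh L] sig(1)[of sh H] sh1(1)[of L] sh1(1)[of H] by auto
  define k where "k = min t (1 - t)"
  have k: "0 < k" "k \<le> t" "k \<le> 1 - t" unfolding k_def using t0 t1 by auto
  define bl where "bl = t - k * m"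
  define bh where "bh = t + k * (1 - m)"
  have km: "k * m \<le> k" "k * (1 - m) \<le> k" using k m01 by (simp_all add: mult_left_le)
  have kmn: "0 \<le> k * m" "0 \<le> k * (1 - m)" using k m01 by simp_all
  have bl0: "0 \<le> bl" unfolding bl_def using k km kmn by linarith
  have bl1: "bl \<le> 1" unfolding bl_def using k km kmn t1 by linarith
  have bh0: "0 \<le> bh" unfolding bh_def using k km kmn t0 by linarith
  have bh1: "bh \<le> 1" unfolding bh_def using k km kmn by linarith
  note bl = bl0 bl1 and bh = bh0 bh1
  define pw where "pw w = Ps sl w * bl + Ps sh w * bh" for w
  have pw_eq: "pw w = t + k * (Ps sh w - m)" for w
    unfolding pw_def bl_def bh_def sh1(2) by (simp add: algebra_simps)
  have pw01: "0 \<le> pw w \<and> pw w \<le> 1" for w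
  proof -
    have "Ps sl w * bl \<le> Ps sl w" "Ps sh w * bh \<le> Ps sh w"
      using bl bh sig(1) by (simp_all add: mult_left_le)
    then show ?thesis unfolding pw_def using sig(1)[of sl w] sig(1)[of sh w] sig(2)[of w] bl bh by (smt (verit) mult_nonneg_nonneg)
  qed
  define g where "g = k * d / 2"
  have g: "g > 0" unfolding g_def using k d by simp
  have pL: "pw L = t - g" unfolding pw_eq g_def m_def d_def by (simp add: field_simps)
  have pH: "pw H = t + g" unfolding pw_eq g_def m_def d_def by (simp add: field_simps)
  define \<delta> where "\<delta> = aC * g / 2"
  have \<delta>: "\<delta> > 0" unfolding \<delta>_def using aC g by simp
  define \<Sigma> where "\<Sigma> N n = (if friendly (v N n) then (1,1) else if unfriendly (v N n) then (0,0) else (bl, bh))" for N n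
  have reg: "\<forall>N\<ge>1. regular_profile N (v N) (\<Sigma> N)"
    unfolding regular_profile_def \<Sigma>_def valid_strategy_def using bl bh fr_not_unfr by auto
  define q where "q w N n = prob_voteA Ps (\<Sigma> N n) w" for w N n
  have q01: "0 \<le> q w N n \<and> q w N n \<le> 1" for w N n
    unfolding q_def \<Sigma>_def prob_voteA_def using pw01[of w] sig(1)[of sl w] sig(1)[of sh w] sig(2)[of w]
    by (auto simp: pw_def)
  have wp: "win_prob Ps \<mu> N (\<Sigma> N) w X = sum (PV (q w N) {..<N}) {S. S \<subseteq> {..<N} \<and> ((\<mu> * real N \<le> real (card S)) = (X = Acc))}" for N w X
    unfolding win_prob_def prob_voters_def PV_def q_def by simp
  have Eq: "sum (q w N) {..<N} = real (card {n. n < N \<and> friendly (v N n)})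
      + (real N - real (card {n. n < N \<and> friendly (v N n)}) - real (card {n. n < N \<and> unfriendly (v N n)})) * pw w" for w N
  proof -
    let ?Fr = "{n. n < N \<and> friendly (v N n)}"
    let ?Un = "{n. n < N \<and> unfriendly (v N n)}"
    have qe: "q w N n = (if n \<in> ?Fr then 1 else 0) + (if n \<in> {..<N} - (?Fr \<union> ?Un) then pw w else 0)" if "n < N" for n
      unfolding q_def \<Sigma>_def prob_voteA_def using that sig(2)[of w] fr_not_unfr by (auto simp: pw_def)
    have "sum (q w N) {..<N} = (\<Sum>n<N. (if n \<in> ?Fr then 1 else 0)) + (\<Sum>n<N. (if n \<in> {..<N} - (?Fr \<union> ?Un) then pw w else 0))"
      using qe by (simp add: sum.distrib)
    also have "\<dots> = real (card ({..<N} \<inter> ?Fr)) + real (card ({..<N} \<inter> ({..<N} - (?Fr \<union> ?Un)))) * pw w"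
      by (simp only: sum.inter_restrict[symmetric] finite_lessThan) simp
    also have "{..<N} \<inter> ?Fr = ?Fr" by auto
    also have "{..<N} \<inter> ({..<N} - (?Fr \<union> ?Un)) = {..<N} - (?Fr \<union> ?Un)" by auto
    also have "card ({..<N} - (?Fr \<union> ?Un)) = N - card (?Fr \<union> ?Un)"
      by (subst card_Diff_subset) auto
    also have "card (?Fr \<union> ?Un) = card ?Fr + card ?Un"
      using fr_not_unfr by (intro card_Un_disjoint) auto
    also have "card ?Fr + card ?Un \<le> N"
    proof -
      have "card (?Fr \<union> ?Un) \<le> card {..<N}" by (intro card_mono) auto
      then show ?thesis using \<open>card (?Fr \<union> ?Un) = card ?Fr + card ?Un\<close> by simp
    qed
    ultimately show ?thesis by (simp add: of_nat_diff)
  qed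
  have mu_eq: "\<mu> = alphaF + (1 - alphaF - alphaU) * t" using tm unfolding aC_def by simp
  have twod: "2 * \<delta> = (1 - alphaF - alphaU) * g" unfolding \<delta>_def aC_def by simp
  have EL: "sum (q L N) {..<N} \<le> \<mu> * real N - 2 * \<delta> * real N + 1"
    and EH: "sum (q H N) {..<N} \<ge> \<mu> * real N + 2 * \<delta> * real N - 1" if N1: "N \<ge> 1" for N
  proof -
    let ?F = "real (card {n. n < N \<and> friendly (v N n)})"
    let ?U = "real (card {n. n < N \<and> unfriendly (v N n)})"
    have vi: "valid_instance B alphaF alphaU N (v N)" using inst N1 by simp
    have cF: "card {n. n < N \<and> friendly (v N n)} = nat \<lfloor>alphaF * real N\<rfloor>"
     and cU: "card {n. n < N \<and> unfriendly (v N n)} = nat \<lfloor>alphaU * real N\<rfloor>"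
      using vi unfolding valid_instance_def by auto
    have F1: "?F \<le> alphaF * real N" "alphaF * real N - 1 \<le> ?F"
      unfolding cF using floor_bounds[of "alphaF * real N"] alpha by auto
    have U1: "?U \<le> alphaU * real N" "alphaU * real N - 1 \<le> ?U"
      unfolding cU using floor_bounds[of "alphaU * real N"] alpha by auto
    have pl01: "0 \<le> pw L" "pw L \<le> 1" and ph01: "0 \<le> pw H" "pw H \<le> 1" using pw01 by auto
    have e1: "sum (q L N) {..<N} = ?F * (1 - pw L) + (real N - ?U) * pw L" unfolding Eq by (simp add: algebra_simps)
    have "?F * (1 - pw L) \<le> (alphaF * real N) * (1 - pw L)" using F1 pl01 by (intro mult_right_mono) auto
    moreover have "(real N - ?U) * pw L \<le> (real N - alphaU * real N + 1) * pw L" using U1 pl01 by (intro mult_right_mono) auto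
    moreover have "(alphaF * real N) * (1 - pw L) + (real N - alphaU * real N + 1) * pw L = \<mu> * real N - 2 * \<delta> * real N + pw L"
      unfolding mu_eq twod pL by (simp add: algebra_simps)
    ultimately show "sum (q L N) {..<N} \<le> \<mu> * real N - 2 * \<delta> * real N + 1" using e1 pl01 by linarith
    have e2: "sum (q H N) {..<N} = ?F * (1 - pw H) + (real N - ?U) * pw H" unfolding Eq by (simp add: algebra_simps)
    have "?F * (1 - pw H) \<ge> (alphaF * real N - 1) * (1 - pw H)" using F1 ph01 by (intro mult_right_mono) auto
    moreover have "(real N - ?U) * pw H \<ge> (real N - alphaU * real N) * pw H" using U1 ph01 by (intro mult_right_mono) auto
    moreover have "(alphaF * real N - 1) * (1 - pw H) + (real N - alphaU * real N) * pw H = \<mu> * real N + 2 * \<delta> * real N - (1 - pw H)"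
      unfolding mu_eq twod pH by (simp add: algebra_simps)
    ultimately show "sum (q H N) {..<N} \<ge> \<mu> * real N + 2 * \<delta> * real N - 1" using e2 ph01 by linarith
  qed
  have bound: "1 - (1 / \<delta>^2) / real N \<le> fidelity PL PH Ps \<mu> N (\<Sigma> N) \<and> fidelity PL PH Ps \<mu> N (\<Sigma> N) \<le> 1"
    if dN: "\<delta> * real N \<ge> 1" for N
  proof -
    have N1: "N \<ge> 1" using dN \<delta> by (metis less_one mult_zero_right not_le of_nat_0 zero_less_one)
    let ?c = "1 / (\<delta>^2 * real N)"
    have qb: "\<And>n. n < N \<Longrightarrow> 0 \<le> q w N n \<and> q w N n \<le> 1" for w using q01 by auto
    have LA: "win_prob Ps \<mu> N (\<Sigma> N) L Acc \<le> ?c"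
      unfolding wp using tailA[OF qb \<delta> dN EL[OF N1]] by simp
    have HR: "win_prob Ps \<mu> N (\<Sigma> N) H Rej \<le> ?c"
      unfolding wp using tailR[OF qb \<delta> dN EH[OF N1]] by simp
    have spl: "win_prob Ps \<mu> N (\<Sigma> N) w Rej + win_prob Ps \<mu> N (\<Sigma> N) w Acc = 1" for w
      unfolding wp using PV_split[of "{..<N}" "q w N" "\<lambda>S. \<mu> * real N \<le> real (card S)"] by simp
    have nn: "0 \<le> win_prob Ps \<mu> N (\<Sigma> N) w X" for w X
      unfolding wp using PV_nonneg[of "{..<N}" "q w N"] q01 by (intro sum_nonneg) auto
    have f: "fidelity PL PH Ps \<mu> N (\<Sigma> N) = 1 - PL * win_prob Ps \<mu> N (\<Sigma> N) L Acc - PH * win_prob Ps \<mu> N (\<Sigma> N) H Rej"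
    proof -
      have a: "win_prob Ps \<mu> N (\<Sigma> N) L Rej = 1 - win_prob Ps \<mu> N (\<Sigma> N) L Acc"
        and b: "win_prob Ps \<mu> N (\<Sigma> N) H Acc = 1 - win_prob Ps \<mu> N (\<Sigma> N) H Rej"
        using spl[of L] spl[of H] by linarith+
      show ?thesis unfolding fidelity_def a b using prior(3) by (simp add: algebra_simps)
    qed
    have "PL * win_prob Ps \<mu> N (\<Sigma> N) L Acc \<le> PL * ?c" using LA prior by (intro mult_left_mono) auto
    moreover have "PH * win_prob Ps \<mu> N (\<Sigma> N) H Rej \<le> PH * ?c" using HR prior by (intro mult_left_mono) auto
    moreover have "PL * ?c + PH * ?c = (1 / \<delta>^2) / real N"
    proof -
      have "PL * ?c + PH * ?c = (PL + PH) * ?c" by (simp only: distrib_right)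
      then show ?thesis using prior(3) by simp
    qed
    moreover have "0 \<le> PL * win_prob Ps \<mu> N (\<Sigma> N) L Acc" "0 \<le> PH * win_prob Ps \<mu> N (\<Sigma> N) H Rej"
      using nn prior by simp_all
    ultimately show ?thesis unfolding f by linarith
  qed
  have ev: "eventually (\<lambda>N. \<delta> * real N \<ge> 1) sequentially"
  proof (rule eventually_sequentiallyI[of "nat \<lceil>1 / \<delta>\<rceil>"])
    fix N assume "nat \<lceil>1 / \<delta>\<rceil> \<le> N"
    then have "1 / \<delta> \<le> real N" by linarith
    then show "\<delta> * real N \<ge> 1" using \<delta> by (simp add: field_simps)
  qed
  have lo: "(\<lambda>N. 1 - (1 / \<delta>^2) / real N) \<longlonglongrightarrow> 1"
    using tendsto_diff[OF tendsto_const lim_const_over_n, of 1 "1 / \<delta>^2"] by simp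
  have "(\<lambda>N. fidelity PL PH Ps \<mu> N (\<Sigma> N)) \<longlonglongrightarrow> 1"
  proof (rule tendsto_sandwich[OF _ _ lo tendsto_const])
    show "\<forall>\<^sub>F N in sequentially. 1 - 1 / \<delta>\<^sup>2 / real N \<le> fidelity PL PH Ps \<mu> N (\<Sigma> N)"
      using ev by eventually_elim (use bound in blast)
    show "\<forall>\<^sub>F N in sequentially. fidelity PL PH Ps \<mu> N (\<Sigma> N) \<le> 1"
      using ev by eventually_elim (use bound in blast)
  qed
  then show ?thesis using reg by blast
qed
end
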